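(* Let $k$ be a positive integer. If $v,w\in V$ lie in the same connected component of $\mathcal F_k$, then $\phi_k(v)=\phi_k(w)$.
   Context: The vertex set $V$ consists of all reduced fractions $p/q$ with $p,q\in\mathbb Z$, $\gcd(p,q)=1$, together with $1/0$; here $p/q$ and $(-p)/(-q)$ denote the same vertex. For vertices define $d(p/q,a/b)=|pb-qa|$. The graph $\mathcal F_k$ has vertex set $V$, with an edge between $p/q$ and $a/b$ exactly when $d(p/q,a/b)=k$. An element $(a,b)\in(\mathbb Z/k\mathbb Z)^2$ is admissible if for $\lambda\in\mathbb Z/k\mathbb Z$, $(\lambda a,\lambda b)=0$ implies $\lambda=0$; $\mathcal L_k$ is the set of admissible elements modulo $v\sim\lambda v$ for units $\lambda\in(\mathbb Z/k\mathbb Z)^*$; $\phi_k:V\to\mathcal L_k$ sends $p/q$ to the class of $(p\bmod k,q\bmod k)$. *)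

theory Defs
  imports Main "HOL-Computational_Algebra.Primes"
begin

text \<open>Vertices p/q are represented by coprime integer pairs (p,q); the pairs (p,q)
and (-p,-q) represent the same vertex (this identification is built into the
connectivity relation below). 1/0 is the pair (1,0).\<close>

definition farey_V :: "(int \<times> int) set" where
  "farey_V = {(p, q). gcd p q = 1}"

definition farey_d :: "int \<times> int \<Rightarrow> int \<times> int \<Rightarrow> int" where
  "farey_d v w = \<bar>fst v * snd w - snd v * fst w\<bar>"

definition farey_edge :: "int \<Rightarrow> int \<times> int \<Rightarrow> int \<times> int \<Rightarrow> bool" where
  "farey_edge k v w \<longleftrightarrow> v \<in> farey_V \<and> w \<in> farey_V \<and> farey_d v w = k"

definition same_vertex :: "int \<times> int \<Rightarrow> int \<times> int \<Rightarrow> bool" where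
  "same_vertex v w \<longleftrightarrow> w = v \<or> w = (- fst v, - snd v)"

definition same_component :: "int \<Rightarrow> int \<times> int \<Rightarrow> int \<times> int \<Rightarrow> bool" where
  "same_component k = (\<lambda>v w. v \<in> farey_V \<and> w \<in> farey_V \<and>
       (farey_edge k v w \<or> same_vertex v w))\<^sup>*\<^sup>*"

text \<open>Elements of Z/kZ are represented by integers in {0..<k}.\<close>
definition admissible :: "int \<Rightarrow> int \<times> int \<Rightarrow> bool" where
  "admissible k ab \<longleftrightarrow> fst ab \<in> {0..<k} \<and> snd ab \<in> {0..<k} \<and>
     (\<forall>l\<in>{0..<k}. (l * fst ab) mod k = 0 \<and> (l * snd ab) mod k = 0 \<longrightarrow> l = 0)"

definition unit_class :: "int \<Rightarrow> int \<times> int \<Rightarrow> (int \<times> int) set" where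
  "unit_class k ab = {((l * fst ab) mod k, (l * snd ab) mod k) | l. l \<in> {0..<k} \<and> coprime l k}"

definition L_k :: "int \<Rightarrow> (int \<times> int) set set" where
  "L_k k = unit_class k ` {ab. admissible k ab}"

definition phi_k :: "int \<Rightarrow> int \<times> int \<Rightarrow> (int \<times> int) set" where
  "phi_k k v = unit_class k (fst v mod k, snd v mod k)"

end

theory Submission
  imports Defs "HOL-Number_Theory.Cong"
begin

lemma unit_of_dvd:
  fixes u v k :: int
  assumes "k dvd (u*v - 1)"
  shows "coprime u k"
proof -
  obtain t where t: "u*v - 1 = k*t" using assms by blast
  have "u*v + k*(-t) = 1" using t by simp
  show ?thesis
  proof (rule coprimeI)
    fix c assume "c dvd u" "c dvd k"
    hence "c dvd (u*v + k*(-t))" by simp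
    thus "is_unit c" using \<open>u*v + k*(-t) = 1\<close> by simp
  qed
qed

lemma mod_step:
  fixes k l u a a' :: int
  assumes "k dvd (a' - u*a)"
  shows "(l * (a' mod k)) mod k = (((l*u) mod k) * (a mod k)) mod k"
proof -
  have "(l * (a' mod k)) mod k = (l*a') mod k" by (simp add: mod_mult_right_eq)
  also have "\<dots> = (l*(u*a)) mod k"
    using assms by (metis cong_iff_dvd_diff cong_scalar_left cong_def)
  also have "\<dots> = (((l*u) mod k) * (a mod k)) mod k"
    by (simp add: mod_mult_eq mult.assoc)
  finally show ?thesis .
qed

lemma uc_sub:
  fixes k u v a b a' b' :: int
  assumes "k > 0" "k dvd (a' - u*a)" "k dvd (b' - u*b)" "k dvd (u*v - 1)"
  shows "unit_class k (a' mod k, b' mod k) \<subseteq> unit_class k (a mod k, b mod k)"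
proof
  fix x assume "x \<in> unit_class k (a' mod k, b' mod k)"
  then obtain l where x: "x = ((l * (a' mod k)) mod k, (l * (b' mod k)) mod k)"
    and l: "l \<in> {0..<k}" "coprime l k"
    unfolding unit_class_def by auto
  have cu: "coprime u k" using unit_of_dvd assms(4) by blast
  have c: "coprime ((l*u) mod k) k"
    using l(2) cu by (metis coprime_commute coprime_mod_right_iff coprime_mult_left_iff less_irrefl assms(1))
  have r: "(l*u) mod k \<in> {0..<k}" using assms(1) by simp
  have "x = (((l*u) mod k * (a mod k)) mod k, ((l*u) mod k * (b mod k)) mod k)"
    using x mod_step[OF assms(2)] mod_step[OF assms(3)] by simp
  thus "x \<in> unit_class k (a mod k, b mod k)"
    unfolding unit_class_def using c r by fastforce
qed

lemma uc_eq:
  fixes k u v a b a' b' :: int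
  assumes "k > 0" "k dvd (a' - u*a)" "k dvd (b' - u*b)" "k dvd (u*v - 1)"
  shows "unit_class k (a' mod k, b' mod k) = unit_class k (a mod k, b mod k)"
proof
  show "unit_class k (a' mod k, b' mod k) \<subseteq> unit_class k (a mod k, b mod k)"
    using uc_sub assms by blast
  have "k dvd (a - v*a')"
  proof -
    have "a - v*a' = -(v*(a' - u*a)) - (u*v - 1)*a" by (simp add: algebra_simps)
    thus ?thesis using assms by (metis dvd_diff dvd_minus_iff dvd_mult dvd_mult2)
  qed
  moreover have "k dvd (b - v*b')"
  proof -
    have "b - v*b' = -(v*(b' - u*b)) - (u*v - 1)*b" by (simp add: algebra_simps)
    thus ?thesis using assms by (metis dvd_diff dvd_minus_iff dvd_mult dvd_mult2)
  qed
  moreover have "k dvd (v*u - 1)" using assms(4) by (simp add: mult.commute)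
  ultimately show "unit_class k (a mod k, b mod k) \<subseteq> unit_class k (a' mod k, b' mod k)"
    using uc_sub assms(1) by blast
qed

lemma edge_unit:
  fixes k p q a b :: int
  assumes "gcd p q = 1" "gcd a b = 1" "\<bar>p*b - q*a\<bar> = k"
  shows "\<exists>u v. k dvd (a - u*p) \<and> k dvd (b - u*q) \<and> k dvd (u*v - 1)"
proof -
  obtain x y where xy: "x*p + y*q = 1" using bezout_int[of p q] assms(1) by auto
  obtain x' y' where xy': "x'*a + y'*b = 1" using bezout_int[of a b] assms(2) by auto
  have kd: "k dvd (p*b - q*a)" using assms(3) by (metis dvd_abs_iff dvd_refl)
  define u where "u = a*x + b*y"
  define v where "v = p*x' + q*y'"
  have e1: "a - u*p = -(y*(p*b - q*a))"
  proof -
    have "a - u*p = a*(x*p + y*q) - u*p" using xy by simp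
    thus ?thesis unfolding u_def by (simp add: algebra_simps)
  qed
  have e2: "b - u*q = x*(p*b - q*a)"
  proof -
    have "b - u*q = b*(x*p + y*q) - u*q" using xy by simp
    thus ?thesis unfolding u_def by (simp add: algebra_simps)
  qed
  have d1: "k dvd (a - u*p)" using e1 kd by simp
  have d2: "k dvd (b - u*q)" using e2 kd by simp
  have "u*v - 1 = x'*(u*p - a) + y'*(u*q - b)"
    using xy' unfolding v_def by (simp add: algebra_simps)
  moreover have "k dvd (u*p - a)" using d1 by (metis dvd_minus_iff minus_diff_eq)
  moreover have "k dvd (u*q - b)" using d2 by (metis dvd_minus_iff minus_diff_eq)
  ultimately have "k dvd (u*v - 1)" by simp
  thus ?thesis using d1 d2 by blast
qed

lemma step_phi:
  assumes "k > 0" "farey_edge k y z \<or> same_vertex y z"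
  shows "phi_k k y = phi_k k z"
proof -
  have "\<exists>u v. k dvd (fst z - u*fst y) \<and> k dvd (snd z - u*snd y) \<and> k dvd (u*v - 1)"
  proof (cases "same_vertex y z")
    case True
    then consider "z = y" | "z = (- fst y, - snd y)" unfolding same_vertex_def by blast
    then show ?thesis
    proof cases
      case 1 then show ?thesis by (intro exI[of _ 1]) auto
    next
      case 2 then show ?thesis by (intro exI[of _ "-1"]) auto
    qed
  next
    case False
    then have "farey_edge k y z" using assms by blast
    then show ?thesis unfolding farey_edge_def farey_V_def farey_d_def
      by (intro edge_unit) auto
  qed
  then obtain u v where "k dvd (fst z - u*fst y)" "k dvd (snd z - u*snd y)" "k dvd (u*v - 1)"
    by blast
  from uc_eq[OF assms(1) this] show ?thesis unfolding phi_k_def by simp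
qed

theorem lemma4p1:
  fixes k :: int and v w :: "int \<times> int"
  assumes "k > 0"
    and "v \<in> farey_V" and "w \<in> farey_V"
    and "same_component k v w"
  shows "phi_k k v = phi_k k w"
  using assms(4) unfolding same_component_def
proof (induction rule: rtranclp_induct)
  case base
  then show ?case by simp
next
  case (step y z)
  then show ?case using step_phi[OF assms(1), of y z] by simp
qed

end
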